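(* Let $V$ be a Hilbert space of functions on a domain $\Omega\subset\mathbb{R}^d$ with a norm $\|\cdot\|$, let $\mathcal{T}_0$ be a (coarse) triangulation of $\Omega$, and for each $T\in\mathcal{T}_0$ let $\|\cdot\|_T$ be a norm on $V|_T$ with $\|v\|_T=\|v|_T\|$ for all $v\in V$. Let $V_0\subset\dots\subset V_L\subset V$ be nested finite element spaces, $u\in V$ the exact solution of a variational problem $a(u,v)=b(v)$ for all $v\in V$, and $u_k\in V_k$ the discrete solutions. Set $e_k:=u-u_k$, $\tilde e_k:=u_L-u_k$ and $\theta_{k,T}:=\|e_k\|_T/\|e_{k-1}\|_T$. Let $0<j<L$ be an integer and $\ell:=L-j$, and suppose there exist $\varepsilon>0$ and constants $\theta_T>0$, $T\in\mathcal{T}_0$, such that $$\theta_T\le\theta_{i,T}\le(1+\varepsilon)\theta_T<1\quad\text{for all }T\in\mathcal{T}_0\text{ and all } i \text{ with } \ell\le i\le L.$$ Define the unscaled local estimates $\eta'_{j,T}:=\|\tilde e_{L-j}\|_T$, the local effectivity indices $\gamma_T:=\eta'_{j,T}/\|e_L\|_T$, $\partial\gamma:=\max_{T\in\mathcal{T}_0}\gamma_T/\min_{T\in\mathcal{T}_0}\gamma_T$, and $$\theta_{\min}:=\min_{T\in\mathcal{T}_0}\theta_T,\qquad \theta_{\max}:=(1+\varepsilon)\max_{T\in\mathcal{T}_0}\theta_T.$$ Then $$\partial\gamma\le\frac{\theta_{\min}^{-j}+1}{\theta_{\max}^{-j}-1}.$$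
   Context: $a:V\times V\to\mathbb{R}$ is a bilinear form and $b:V\to\mathbb{R}$ a linear form; $u_k$ are the exact Galerkin solutions on the spaces $V_k$, which are associated with nested triangulations obtained from $\mathcal{T}_0$ by successive uniform refinement, so every $T\in\mathcal{T}_0$ is a union of fine elements. The quantities $\theta_{k,T}$ are local grid convergence factors and $\eta'_{j,T}$ is a local error indicator for $\|e_L\|_T$. *)

theory Defs
  imports "HOL-Analysis.Analysis"
begin

text \<open>The local norm \<open>v \<mapsto> \<parallel>v|_T\<parallel>_T\<close>
  of an element v of V is a seminorm on V (it vanishes exactly on functions
  vanishing on T).\<close>
definition local_seminorm :: "('v::real_vector \<Rightarrow> real) \<Rightarrow> bool" where
  "local_seminorm p \<longleftrightarrow>
     (\<forall>x y. p (x + y) \<le> p x + p y) \<and> (\<forall>c x. p (c *\<^sub>R x) = \<bar>c\<bar> * p x)"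

definition fin_dim_subspace :: "'v::real_vector set \<Rightarrow> bool" where
  "fin_dim_subspace S \<longleftrightarrow> subspace S \<and> (\<exists>B. finite B \<and> span B = S)"

definition galerkin_solution ::
  "('v \<Rightarrow> 'v \<Rightarrow> real) \<Rightarrow> ('v \<Rightarrow> real) \<Rightarrow> 'v set \<Rightarrow> 'v \<Rightarrow> bool" where
  "galerkin_solution a b S w \<longleftrightarrow> w \<in> S \<and> (\<forall>v\<in>S. a w v = b v)"

definition conv_factor ::
  "('v::real_vector \<Rightarrow> real) \<Rightarrow> 'v \<Rightarrow> (nat \<Rightarrow> 'v) \<Rightarrow> nat \<Rightarrow> real" where
  "conv_factor nT u uh k = nT (u - uh k) / nT (u - uh (k - 1))"

definition eff_index ::
  "('v::real_vector \<Rightarrow> real) \<Rightarrow> 'v \<Rightarrow> (nat \<Rightarrow> 'v) \<Rightarrow> nat \<Rightarrow> nat \<Rightarrow> real" where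
  "eff_index nT u uh L j = nT (uh L - uh (L - j)) / nT (u - uh L)"

end

theory Submission
  imports Defs
begin

lemma semi_facts:
  assumes "local_seminorm p"
  shows "p x \<ge> 0" "p (x - y) \<ge> p x - p y" "p (x - y) \<le> p x + p y"
proof -
  have tri: "\<And>x y. p (x + y) \<le> p x + p y" and hom: "\<And>c x. p (c *\<^sub>R x) = \<bar>c\<bar> * p x"
    using assms unfolding local_seminorm_def by auto
  have neg: "\<And>z. p (- z) = p z" using hom[of "-1"] by simp
  have "p 0 = 0" using hom[of 0 x] by simp
  then have "0 \<le> p x + p (- x)" using tri[of x "-x"] by simp
  then show "p x \<ge> 0" using neg by simp
  have "p x \<le> p (x - y) + p y" using tri[of "x - y" y] by simp
  then show "p (x - y) \<ge> p x - p y" by simp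
  show "p (x - y) \<le> p x + p y" using tri[of x "-y"] neg[of y] by simp
qed

lemma ratio_pow:
  fixes f :: "nat \<Rightarrow> real"
  assumes nn: "\<forall>k. f k \<ge> 0" and c: "0 < c"
    and r: "\<forall>m\<le>j. c \<le> f (s+m) / f (s+m-1) \<and> f (s+m) / f (s+m-1) \<le> d"
  shows "m \<le> j \<Longrightarrow> c^m * f s \<le> f (s+m) \<and> f (s+m) \<le> d^m * f s \<and> f (s+m) > 0"
proof (induction m)
  case 0
  have "c \<le> f s / f (s-1)" using r by (metis le0 add_0_right)
  then have "f s / f (s - 1) > 0" using c by linarith
  then have "f s \<noteq> 0" by auto
  then show ?case using nn[rule_format, of s] by auto
next
  case (Suc m)
  then have ih: "c^m * f s \<le> f (s+m)" "f (s+m) \<le> d^m * f s" "f (s+m) > 0" by auto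
  have rr: "c \<le> f (s+Suc m) / f (s+m)" "f (s+Suc m) / f (s+m) \<le> d"
    using r Suc.prems by fastforce+
  have a1: "c * f (s+m) \<le> f (s+Suc m)" using rr(1) ih(3) by (simp add: pos_le_divide_eq)
  have a2: "f (s+Suc m) \<le> d * f (s+m)" using rr(2) ih(3) by (simp add: pos_divide_le_eq)
  have dnn: "d \<ge> 0" using rr c by linarith
  have "c^Suc m * f s = c * (c^m * f s)" by simp
  also have "\<dots> \<le> c * f (s+m)" using ih(1) c by simp
  finally have g1: "c^Suc m * f s \<le> f (s+Suc m)" using a1 by linarith
  have "d * f (s+m) \<le> d * (d^m * f s)" using ih(2) dnn by (simp add: mult_left_mono)
  then have g2: "f (s+Suc m) \<le> d^Suc m * f s" using a2 by simp
  have "c * f (s+m) > 0" using c ih(3) by simp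
  then show ?case using g1 g2 a1 by linarith
qed

theorem corollary2:
  fixes a :: "'v::{real_inner, complete_space} \<Rightarrow> 'v \<Rightarrow> real"
    and b :: "'v \<Rightarrow> real"
    and u :: 'v
    and Vh :: "nat \<Rightarrow> 'v set"
    and uh :: "nat \<Rightarrow> 'v"
    and T0 :: "'T set"
    and nT :: "'T \<Rightarrow> 'v \<Rightarrow> real"
    and L j :: nat
    and \<epsilon> :: real
    and \<theta> :: "'T \<Rightarrow> real"
  assumes bil: "bilinear a"
    and lin: "linear b"
    and exact: "\<forall>v. a u v = b v"
    and spaces: "\<forall>k. fin_dim_subspace (Vh k)"
    and nested: "\<forall>k. Vh k \<subseteq> Vh (Suc k)"
    and discrete: "\<forall>k. galerkin_solution a b (Vh k) (uh k)"
    and T0_fin: "finite T0" and T0_ne: "T0 \<noteq> {}"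
    and local_norms: "\<forall>T\<in>T0. local_seminorm (nT T)"
    and j_pos: "0 < j" and j_lt: "j < L"
    and eps_pos: "\<epsilon> > 0"
    and theta_pos: "\<forall>T\<in>T0. \<theta> T > 0"
    and theta_bounds: "\<forall>T\<in>T0. \<forall>i. L - j \<le> i \<and> i \<le> L \<longrightarrow>
          \<theta> T \<le> conv_factor (nT T) u uh i \<and>
          conv_factor (nT T) u uh i \<le> (1 + \<epsilon>) * \<theta> T \<and>
          (1 + \<epsilon>) * \<theta> T < 1"
  shows "Max ((\<lambda>T. eff_index (nT T) u uh L j) ` T0)
           / Min ((\<lambda>T. eff_index (nT T) u uh L j) ` T0)
         \<le> (inverse (Min (\<theta> ` T0)) ^ j + 1)
           / (inverse ((1 + \<epsilon>) * Max (\<theta> ` T0)) ^ j - 1)"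
proof -
  define g where "g T = eff_index (nT T) u uh L j" for T
  define tmin where "tmin = Min (\<theta> ` T0)"
  define tmax where "tmax = (1 + \<epsilon>) * Max (\<theta> ` T0)"
  define U where "U = inverse tmin ^ j + 1"
  define D where "D = inverse tmax ^ j - 1"
  obtain T1 where T1: "T1 \<in> T0" "Max (\<theta> ` T0) = \<theta> T1"
    using T0_fin T0_ne by (metis (no_types, opaque_lifting) Max_in finite_imageI image_iff image_is_empty)
  obtain T2 where T2: "T2 \<in> T0" "tmin = \<theta> T2"
    unfolding tmin_def using T0_fin T0_ne by (metis (no_types, opaque_lifting) Min_in finite_imageI image_iff image_is_empty)
  have tmin_pos: "tmin > 0" using T2 theta_pos by auto
  have tmax_lt: "tmax < 1" unfolding tmax_def T1(2) using theta_bounds T1(1) j_lt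
    by (metis diff_le_self order_refl)
  have tmax_pos: "tmax > 0" unfolding tmax_def T1(2) using theta_pos T1(1) eps_pos by simp
  have "inverse tmax > 1" using tmax_lt tmax_pos by (simp add: one_less_inverse)
  then have "inverse tmax ^ j > 1" using j_pos by (simp add: one_less_power)
  then have D_pos: "D > 0" unfolding D_def by simp
  have bounds: "D \<le> g T \<and> g T \<le> U" if T: "T \<in> T0" for T
  proof -
    define n where "n = nT T"
    define f where "f k = n (u - uh k)" for k
    have sn: "local_seminorm n" using local_norms T n_def by simp
    have nn: "\<forall>k. f k \<ge> 0" unfolding f_def using semi_facts(1)[OF sn] by simp
    define c where "c = \<theta> T"
    define d where "d = (1 + \<epsilon>) * \<theta> T"
    have c: "c > 0" using theta_pos T c_def by simp
    have r: "\<forall>m\<le>j. c \<le> f (L-j+m) / f (L-j+m-1) \<and> f (L-j+m) / f (L-j+m-1) \<le> d"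
    proof (intro allI impI)
      fix m assume "m \<le> j"
      then have "L - j \<le> L-j+m \<and> L-j+m \<le> L" using j_lt by auto
      then show "c \<le> f (L-j+m) / f (L-j+m-1) \<and> f (L-j+m) / f (L-j+m-1) \<le> d"
        using theta_bounds T unfolding c_def d_def f_def n_def conv_factor_def by blast
    qed
    have dlt: "d < 1" using theta_bounds T j_lt unfolding d_def by (metis diff_le_self order_refl)
    have key: "c^j * f (L-j) \<le> f L \<and> f L \<le> d^j * f (L-j) \<and> f L > 0"
      using ratio_pow[OF nn c r, of j] j_lt by simp
    define A where "A = f (L-j)"
    define B where "B = f L"
    have B: "B > 0" using key B_def by simp
    have A: "A \<ge> 0" using nn A_def by simp
    have dpos: "d > 0" using c eps_pos unfolding c_def d_def by simp
    have eq: "uh L - uh (L - j) = (u - uh (L-j)) - (u - uh L)" by simp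
    have g: "g T = n (uh L - uh (L - j)) / B" unfolding g_def eff_index_def B_def f_def n_def by simp
    have e1: "n (uh L - uh (L - j)) \<ge> A - B" unfolding eq A_def B_def f_def
      using semi_facts(2)[OF sn] by blast
    have e2: "n (uh L - uh (L - j)) \<le> A + B" unfolding eq A_def B_def f_def
      using semi_facts(3)[OF sn] by blast
    have cj: "c^j > 0" using c by simp
    have dj: "d^j > 0" using dpos by simp
    have AB1: "A / B \<le> inverse c ^ j"
    proof -
      have "c^j * A \<le> B" using key A_def B_def by simp
      then have "A \<le> B / c^j" using cj by (simp add: pos_le_divide_eq mult.commute)
      then have "A / B \<le> 1 / c^j" using B by (simp add: divide_le_eq field_simps)
      then show ?thesis by (simp add: power_one_over inverse_eq_divide)
    qed
    have AB2: "inverse d ^ j \<le> A / B"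
    proof -
      have "B \<le> d^j * A" using key A_def B_def by simp
      then have "B / d^j \<le> A" using dj by (simp add: pos_divide_le_eq mult.commute)
      then have "1 / d^j \<le> A / B" using B dj by (simp add: field_simps)
      then show ?thesis by (simp add: power_one_over inverse_eq_divide)
    qed
    have gU: "g T \<le> A / B + 1"
    proof -
      have "n (uh L - uh (L - j)) / B \<le> (A + B) / B" using e2 B by (simp add: divide_right_mono)
      also have "\<dots> = A / B + 1" using B by (simp add: add_divide_distrib)
      finally show ?thesis unfolding g .
    qed
    have gD: "A / B - 1 \<le> g T"
    proof -
      have "A / B - 1 = (A - B) / B" using B by (simp add: diff_divide_distrib)
      also have "\<dots> \<le> n (uh L - uh (L - j)) / B" using e1 B by (simp add: divide_right_mono)
      finally show ?thesis unfolding g .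
    qed
    have "tmin \<le> c" unfolding tmin_def c_def using T0_fin T by simp
    then have "inverse c \<le> inverse tmin" using tmin_pos by (simp add: le_imp_inverse_le)
    then have "inverse c ^ j \<le> inverse tmin ^ j" using c by (simp add: power_mono)
    then have 1: "g T \<le> U" unfolding U_def using gU AB1 by linarith
    have "Max (\<theta> ` T0) \<ge> \<theta> T" using T0_fin T by simp
    then have "d \<le> tmax" unfolding d_def tmax_def using eps_pos by simp
    then have "inverse tmax \<le> inverse d" using dpos by (simp add: le_imp_inverse_le)
    then have "inverse tmax ^ j \<le> inverse d ^ j" using tmax_pos by (simp add: power_mono)
    then have 2: "D \<le> g T" unfolding D_def using gD AB2 by linarith
    show ?thesis using 1 2 by simp
  qed
  have fin: "finite (g ` T0)" "g ` T0 \<noteq> {}" using T0_fin T0_ne by auto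
  have maxU: "Max (g ` T0) \<le> U" using fin bounds by auto
  have minD: "D \<le> Min (g ` T0)" using fin bounds by auto
  have "0 \<le> U" using maxU bounds T1(1) D_pos by force
  then have "Max (g ` T0) / Min (g ` T0) \<le> U / D"
    using frac_le[OF _ maxU D_pos minD] by simp
  then show ?thesis unfolding g_def U_def D_def tmin_def tmax_def by simp
qed

end
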